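(* For every annotated type $\theta$ and every ascending chain $u:\mathbb{N}\to[\![\theta^*]\!]_{\bot\star}$, if $\mathsf{safe}\,\theta\,(u_i)$ holds for all $i$, then $\mathsf{safe}\,\theta\,(\bigsqcup_i u_i)$ holds.
   Context: Fix sets $\mathsf{Principals}$, $\mathsf{Privileges}$. Types $t::=\mathtt{bool}\mid t_1\to t_2$. $\bot,\star$ are two distinct values that are neither booleans nor functions. For a cpo $C$ (poset with lubs of ascending chains), $C_{\bot\star}=C\cup\{\bot,\star\}$ with $u\le v$ iff $u=\bot$, or $u=v$, or $u,v\in C$ and $u\le v$ in $C$. $[\![\mathtt{bool}]\!]=\{\mathsf{true},\mathsf{false}\}$ ordered by equality; $\mathcal{P}(\mathsf{Privileges})$ ordered by equality; $[\![t_1\to t_2]\!]=\mathcal{P}(\mathsf{Privileges})\to[\![t_1]\!]\to[\![t_2]\!]_{\bot\star}$, continuous functions ordered pointwise (lubs pointwise). Annotated types: $\theta::=\mathtt{bool}\mid\theta_1\xrightarrow{\Pi}\theta_2$ with $\Pi\subseteq\mathsf{Privileges}$; erasure $\mathtt{bool}^*=\mathtt{bool}$, $(\theta_1\xrightarrow{\Pi}\theta_2)^*=\theta_1^*\to\theta_2^*$. The predicate $\mathsf{safe}\,\theta$ on $[\![\theta^*]\!]_{\bot\star}$: $\mathsf{safe}\,\theta(\bot)$ is true and $\mathsf{safe}\,\theta(\star)$ is false for all $\theta$; otherwise $\mathsf{safe}\,\mathtt{bool}(b)$ is true, and $\mathsf{safe}(\theta_1\xrightarrow{\Pi}\theta_2)(f)$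 iff for all $P\subseteq\mathsf{Privileges}$ and all $d\in[\![\theta_1^*]\!]$, $\Pi\subseteq P$ and $\mathsf{safe}\,\theta_1(d)$ imply $\mathsf{safe}\,\theta_2(fPd)$. *)

theory Defs
  imports Main
begin

datatype ty = TBool | TArr ty ty

datatype 'p aty = ABool | AArr "'p aty" "'p set" "'p aty"

fun erase :: "'p aty \<Rightarrow> ty" where
  "erase ABool = TBool"
| "erase (AArr th1 P th2) = TArr (erase th1) (erase th2)"

datatype 'a lift = Bot | Star | Val 'a

definition liftset :: "'a set \<Rightarrow> 'a lift set" where
  "liftset S = {Bot, Star} \<union> Val ` S"

definition lle :: "('a \<Rightarrow> 'a \<Rightarrow> bool) \<Rightarrow> 'a lift \<Rightarrow> 'a lift \<Rightarrow> bool" where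
  "lle le u v \<longleftrightarrow> u = Bot \<or> u = v \<or> (\<exists>a b. u = Val a \<and> v = Val b \<and> le a b)"

definition is_chain :: "'a set \<Rightarrow> ('a \<Rightarrow> 'a \<Rightarrow> bool) \<Rightarrow> (nat \<Rightarrow> 'a) \<Rightarrow> bool" where
  "is_chain S le c \<longleftrightarrow> (\<forall>i. c i \<in> S \<and> le (c i) (c (Suc i)))"

definition is_lub :: "'a set \<Rightarrow> ('a \<Rightarrow> 'a \<Rightarrow> bool) \<Rightarrow> (nat \<Rightarrow> 'a) \<Rightarrow> 'a \<Rightarrow> bool" where
  "is_lub S le c x \<longleftrightarrow> x \<in> S \<and> (\<forall>i. le (c i) x) \<and> (\<forall>y\<in>S. (\<forall>i. le (c i) y) \<longrightarrow> le x y)"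

definition cont_map :: "'a set \<Rightarrow> ('a \<Rightarrow> 'a \<Rightarrow> bool) \<Rightarrow> 'b set \<Rightarrow> ('b \<Rightarrow> 'b \<Rightarrow> bool)
    \<Rightarrow> ('a \<Rightarrow> 'b lift) \<Rightarrow> bool" where
  "cont_map S1 le1 S2 le2 g \<longleftrightarrow>
     (\<forall>x\<in>S1. \<forall>y\<in>S1. le1 x y \<longrightarrow> lle le2 (g x) (g y)) \<and>
     (\<forall>c x. is_chain S1 le1 c \<longrightarrow> is_lub S1 le1 c x \<longrightarrow>
        is_lub (liftset S2) (lle le2) (g \<circ> c) (g x))"

text \<open>Elements of P(Privileges) -> [[t1]] -> [[t2]]_{bot,star}, continuous (P(Privileges) is
  discretely ordered, so continuity is continuity of each f P); represented extensionally
  (value Bot outside the carrier of [[t1]]).\<close>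
definition valid_funs :: "'u set \<Rightarrow> ('u \<Rightarrow> 'u \<Rightarrow> bool) \<Rightarrow> 'u set \<Rightarrow> ('u \<Rightarrow> 'u \<Rightarrow> bool)
    \<Rightarrow> ('p set \<Rightarrow> 'u \<Rightarrow> 'u lift) set" where
  "valid_funs S1 le1 S2 le2 =
     {f. (\<forall>P. \<forall>d\<in>S1. f P d \<in> liftset S2) \<and> (\<forall>P. \<forall>d. d \<notin> S1 \<longrightarrow> f P d = Bot) \<and>
         (\<forall>P. cont_map S1 le1 S2 le2 (f P))}"

text \<open>The semantic cpos [[t]] (carrier and order), realised inside a universe type 'u via
  an encoding B of booleans and an encoding F of (semantic) functions.\<close>
fun sem :: "(bool \<Rightarrow> 'u) \<Rightarrow> (('p set \<Rightarrow> 'u \<Rightarrow> 'u lift) \<Rightarrow> 'u) \<Rightarrow> ty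
    \<Rightarrow> 'u set \<times> ('u \<Rightarrow> 'u \<Rightarrow> bool)" where
  "sem B F TBool = (range B, (\<lambda>x y. x = y))"
| "sem B F (TArr t1 t2) =
     (let V = valid_funs (fst (sem B F t1)) (snd (sem B F t1)) (fst (sem B F t2)) (snd (sem B F t2))
      in (F ` V,
          \<lambda>x y. \<exists>f\<in>V. \<exists>g\<in>V. x = F f \<and> y = F g \<and>
                 (\<forall>P. \<forall>d\<in>fst (sem B F t1). lle (snd (sem B F t2)) (f P d) (g P d))))"

definition sdom :: "(bool \<Rightarrow> 'u) \<Rightarrow> (('p set \<Rightarrow> 'u \<Rightarrow> 'u lift) \<Rightarrow> 'u) \<Rightarrow> ty \<Rightarrow> 'u set" where
  "sdom B F t = fst (sem B F t)"

definition ord :: "(bool \<Rightarrow> 'u) \<Rightarrow> (('p set \<Rightarrow> 'u \<Rightarrow> 'u lift) \<Rightarrow> 'u) \<Rightarrow> ty \<Rightarrow> 'u \<Rightarrow> 'u \<Rightarrow> bool" where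
  "ord B F t = snd (sem B F t)"

definition funs :: "(bool \<Rightarrow> 'u) \<Rightarrow> (('p set \<Rightarrow> 'u \<Rightarrow> 'u lift) \<Rightarrow> 'u) \<Rightarrow> ty \<Rightarrow> ty
    \<Rightarrow> ('p set \<Rightarrow> 'u \<Rightarrow> 'u lift) set" where
  "funs B F t1 t2 = valid_funs (sdom B F t1) (ord B F t1) (sdom B F t2) (ord B F t2)"

text \<open>The encodings must be faithful: B injective, F injective on the semantic functions of
  each arrow type. Then sdom B F t with ord B F t is (an isomorphic copy of) [[t]].\<close>
definition sem_model :: "(bool \<Rightarrow> 'u) \<Rightarrow> (('p set \<Rightarrow> 'u \<Rightarrow> 'u lift) \<Rightarrow> 'u) \<Rightarrow> bool" where
  "sem_model B F \<longleftrightarrow> inj B \<and> (\<forall>t1 t2. inj_on F (funs B F t1 t2))"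

definition app :: "(bool \<Rightarrow> 'u) \<Rightarrow> (('p set \<Rightarrow> 'u \<Rightarrow> 'u lift) \<Rightarrow> 'u) \<Rightarrow> ty \<Rightarrow> ty
    \<Rightarrow> 'u \<Rightarrow> 'p set \<Rightarrow> 'u \<Rightarrow> 'u lift" where
  "app B F t1 t2 x P d = (THE r. \<exists>f\<in>funs B F t1 t2. x = F f \<and> r = f P d)"

fun safe :: "(bool \<Rightarrow> 'u) \<Rightarrow> (('p set \<Rightarrow> 'u \<Rightarrow> 'u lift) \<Rightarrow> 'u) \<Rightarrow> 'p aty \<Rightarrow> 'u lift \<Rightarrow> bool" where
  "safe B F th Bot = True"
| "safe B F th Star = False"
| "safe B F ABool (Val b) = True"
| "safe B F (AArr th1 Pi th2) (Val f) =
     (\<forall>P. \<forall>d\<in>sdom B F (erase th1). Pi \<subseteq> P \<longrightarrow> safe B F th1 (Val d) \<longrightarrow>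
        safe B F th2 (app B F (erase th1) (erase th2) f P d))"

end

theory Submission
  imports Defs
begin

lemma sdom_arr: "sdom B F (TArr t1 t2) = F ` funs B F t1 t2"
  by (simp add: sdom_def ord_def funs_def Let_def)

lemma ord_arr: "ord B F (TArr t1 t2) x y \<longleftrightarrow> (\<exists>f\<in>funs B F t1 t2. \<exists>g\<in>funs B F t1 t2. x = F f \<and> y = F g \<and>
   (\<forall>P. \<forall>d\<in>sdom B F t1. lle (ord B F t2) (f P d) (g P d)))"
  by (simp add: sdom_def ord_def funs_def Let_def)

lemma sdom_bool: "sdom B F TBool = range B" by (simp add: sdom_def)
lemma ord_bool: "ord B F TBool x y \<longleftrightarrow> x = y" by (simp add: ord_def)

definition dec where "dec B F t1 t2 x = inv_into (funs B F t1 t2) F x"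

lemma dec_F: "sem_model B F \<Longrightarrow> f \<in> funs B F t1 t2 \<Longrightarrow> dec B F t1 t2 (F f) = f"
  unfolding dec_def sem_model_def by (simp add: inv_into_f_f)

lemma dec_in: "x \<in> sdom B F (TArr t1 t2) \<Longrightarrow> dec B F t1 t2 x \<in> funs B F t1 t2"
  unfolding dec_def sdom_arr by (rule inv_into_into)

lemma F_dec: "x \<in> sdom B F (TArr t1 t2) \<Longrightarrow> F (dec B F t1 t2 x) = x"
  unfolding dec_def sdom_arr by (simp add: f_inv_into_f)

lemma ord_arr_iff: assumes "sem_model B F"
  shows "ord B F (TArr t1 t2) x y \<longleftrightarrow> x \<in> sdom B F (TArr t1 t2) \<and> y \<in> sdom B F (TArr t1 t2) \<and>
   (\<forall>P. \<forall>d\<in>sdom B F t1. lle (ord B F t2) (dec B F t1 t2 x P d) (dec B F t1 t2 y P d))"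
proof
  assume "ord B F (TArr t1 t2) x y"
  then obtain f g where f: "f\<in>funs B F t1 t2" and g: "g\<in>funs B F t1 t2" and xy: "x = F f" "y = F g"
    and p: "\<forall>P. \<forall>d\<in>sdom B F t1. lle (ord B F t2) (f P d) (g P d)" unfolding ord_arr by blast
  show "x \<in> sdom B F (TArr t1 t2) \<and> y \<in> sdom B F (TArr t1 t2) \<and>
   (\<forall>P. \<forall>d\<in>sdom B F t1. lle (ord B F t2) (dec B F t1 t2 x P d) (dec B F t1 t2 y P d))"
    using f g xy p dec_F[OF assms] by (auto simp: sdom_arr)
next
  assume h: "x \<in> sdom B F (TArr t1 t2) \<and> y \<in> sdom B F (TArr t1 t2) \<and>
   (\<forall>P. \<forall>d\<in>sdom B F t1. lle (ord B F t2) (dec B F t1 t2 x P d) (dec B F t1 t2 y P d))"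
  show "ord B F (TArr t1 t2) x y" unfolding ord_arr
    using h dec_in F_dec by metis
qed

lemma app_dec: "sem_model B F \<Longrightarrow> x \<in> sdom B F (TArr t1 t2) \<Longrightarrow> app B F t1 t2 x P d = dec B F t1 t2 x P d"
  unfolding app_def
  apply (rule the_equality)
   apply (metis dec_in F_dec)
  by (metis dec_F)

lemma funs_iff: "f \<in> funs B F t1 t2 \<longleftrightarrow> (\<forall>P. \<forall>d\<in>sdom B F t1. f P d \<in> liftset (sdom B F t2)) \<and>
   (\<forall>P d. d \<notin> sdom B F t1 \<longrightarrow> f P d = Bot) \<and> (\<forall>P. cont_map (sdom B F t1) (ord B F t1) (sdom B F t2) (ord B F t2) (f P))"
  by (simp add: funs_def valid_funs_def)

lemma lle_trans: "(\<forall>a b c. le a b \<longrightarrow> le b c \<longrightarrow> le a c) \<Longrightarrow> lle le x y \<Longrightarrow> lle le y z \<Longrightarrow> lle le x z"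
  unfolding lle_def by blast
lemma lle_antisym: "(\<forall>a b. le a b \<longrightarrow> le b a \<longrightarrow> a = b) \<Longrightarrow> lle le x y \<Longrightarrow> lle le y x \<Longrightarrow> x = y"
  unfolding lle_def by blast
lemma lle_refl[simp]: "lle le x x" unfolding lle_def by blast
lemma lle_Star[simp]: "lle le Star y \<longleftrightarrow> y = Star" unfolding lle_def by auto
lemma lle_Bot[simp]: "lle le x Bot \<longleftrightarrow> x = Bot" "lle le Bot x" unfolding lle_def by auto
lemma lle_Val: "lle le (Val a) y \<longleftrightarrow> (\<exists>b. y = Val b \<and> (a = b \<or> le a b))" unfolding lle_def by auto
lemma lle_ValVal[simp]: "lle le (Val a) (Val b) \<longleftrightarrow> a = b \<or> le a b" unfolding lle_def by auto
lemma liftset_simps[simp]: "Bot \<in> liftset S" "Star \<in> liftset S" "Val a \<in> liftset S \<longleftrightarrow> a \<in> S"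
  unfolding liftset_def by auto

lemma ord_props: assumes "sem_model B F"
  shows "(\<forall>a b c. ord B F t a b \<longrightarrow> ord B F t b c \<longrightarrow> ord B F t a c) \<and>
    (\<forall>a b. ord B F t a b \<longrightarrow> ord B F t b a \<longrightarrow> a = b) \<and> (\<forall>a\<in>sdom B F t. ord B F t a a)"
proof (induction t)
  case TBool then show ?case by (simp add: ord_bool)
next
  case (TArr t1 t2)
  have tr: "\<forall>a b c. ord B F t2 a b \<longrightarrow> ord B F t2 b c \<longrightarrow> ord B F t2 a c"
   and an: "\<forall>a b. ord B F t2 a b \<longrightarrow> ord B F t2 b a \<longrightarrow> a = b" using TArr.IH(2) by auto
  show ?case
  proof (intro conjI allI impI ballI)
    fix a b c assume "ord B F (TArr t1 t2) a b" "ord B F (TArr t1 t2) b c"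
    then show "ord B F (TArr t1 t2) a c" unfolding ord_arr_iff[OF assms]
      using lle_trans[OF tr] by blast
  next
    fix a b assume ab: "ord B F (TArr t1 t2) a b" "ord B F (TArr t1 t2) b a"
    then have ina: "a \<in> sdom B F (TArr t1 t2)" and inb: "b \<in> sdom B F (TArr t1 t2)"
      and p: "\<forall>P. \<forall>d\<in>sdom B F t1. dec B F t1 t2 a P d = dec B F t1 t2 b P d"
      unfolding ord_arr_iff[OF assms] using lle_antisym[OF an] by blast+
    have "dec B F t1 t2 a = dec B F t1 t2 b"
    proof (intro ext)
      fix P d show "dec B F t1 t2 a P d = dec B F t1 t2 b P d"
        using p dec_in[OF ina] dec_in[OF inb] unfolding funs_iff by (cases "d \<in> sdom B F t1") auto
    qed
    then show "a = b" using F_dec[OF ina] F_dec[OF inb] by metis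
  next
    fix a assume "a \<in> sdom B F (TArr t1 t2)"
    then show "ord B F (TArr t1 t2) a a" unfolding ord_arr_iff[OF assms] by simp
  qed
qed


lemma chain_mono_lle:
  assumes tr: "\<forall>a b c. le a b \<longrightarrow> le b c \<longrightarrow> le a c" and ch: "is_chain S (lle le) c" and ij: "i \<le> j"
  shows "lle le (c i) (c j)"
  using ij
proof (induction j rule: dec_induct)
  case base then show ?case by simp
next
  case (step n) then show ?case using ch lle_trans[OF tr] unfolding is_chain_def by blast
qed

lemma chain_mono:
  assumes tr: "\<forall>a b c. le a b \<longrightarrow> le b c \<longrightarrow> le a c" and rf: "\<forall>a\<in>S. le a a"
    and ch: "is_chain S le c" and ij: "i \<le> j"
  shows "le (c i) (c j)"
  using ij
proof (induction j rule: dec_induct)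
  case base then show ?case using ch rf unfolding is_chain_def by blast
next
  case (step n) then show ?case using ch tr unfolding is_chain_def by blast
qed

lemma lub_unique: "(\<forall>a b. le a b \<longrightarrow> le b a \<longrightarrow> a = b) \<Longrightarrow> is_lub S le c x \<Longrightarrow> is_lub S le c y \<Longrightarrow> x = y"
  unfolding is_lub_def by blast

lemma lift_tail:
  assumes tr: "\<forall>a b c. le a b \<longrightarrow> le b c \<longrightarrow> le a c" and rf: "\<forall>a\<in>S. le a a"
    and ch: "is_chain (liftset S) (lle le) c" and cn: "c n = Val b"
  shows "\<exists>v. (\<forall>k. c (n+k) = Val (v k)) \<and> is_chain S le v"
proof -
  have "\<forall>k. \<exists>a. c (n+k) = Val a"
  proof
    fix k have "lle le (c n) (c (n+k))" using chain_mono_lle[OF tr ch] by simp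
    then show "\<exists>a. c (n+k) = Val a" using cn lle_Val by metis
  qed
  then obtain v where v: "\<forall>k. c (n+k) = Val (v k)" by metis
  moreover have S: "\<forall>k. v k \<in> S" using ch v unfolding is_chain_def by (metis liftset_simps(3))
  moreover have "\<forall>k. le (v k) (v (Suc k))"
  proof
    fix k have "lle le (c (n+k)) (c (n+Suc k))" using ch unfolding is_chain_def by simp
    then have "v k = v (Suc k) \<or> le (v k) (v (Suc k))" using v by (metis lle_ValVal)
    then show "le (v k) (v (Suc k))" using rf S by metis
  qed
  ultimately show ?thesis unfolding is_chain_def by blast
qed

lemma tail_lub:
  assumes tr: "\<forall>a b c. le a b \<longrightarrow> le b c \<longrightarrow> le a c" and rf: "\<forall>a\<in>S. le a a"
    and ch: "is_chain (liftset S) (lle le) c" and v: "\<forall>k. c (n+k) = Val (v k)"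
    and lub: "is_lub (liftset S) (lle le) c (Val a)"
  shows "is_lub S le v a"
  unfolding is_lub_def
proof (intro conjI allI ballI impI)
  show aS: "a \<in> S" using lub unfolding is_lub_def by simp
  fix i show "le (v i) a" using lub v[rule_format, of i] rf aS unfolding is_lub_def by (metis lle_ValVal)
next
  fix y assume yS: "y \<in> S" and ub: "\<forall>i. le (v i) y"
  have "\<forall>i. lle le (c i) (Val y)"
  proof
    fix i show "lle le (c i) (Val y)"
    proof (cases "i \<le> n")
      case True
      then have "lle le (c i) (c n)" using chain_mono_lle[OF tr ch] by simp
      moreover have "lle le (c n) (Val y)" using v[rule_format, of 0] ub by simp
      ultimately show ?thesis using lle_trans[OF tr] by blast
    next
      case False
      then obtain k where "i = n + k" by (metis le_add_diff_inverse nat_le_linear)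
      then show ?thesis using v ub by simp
    qed
  qed
  moreover have "Val y \<in> liftset S" using yS by simp
  ultimately have "lle le (Val a) (Val y)" using lub unfolding is_lub_def by blast
  then show "le a y" using rf yS by auto
qed

lemma lub_lift:
  assumes tr: "\<forall>a b c. le a b \<longrightarrow> le b c \<longrightarrow> le a c" and rf: "\<forall>a\<in>S. le a a"
    and ch: "is_chain (liftset S) (lle le) c" and v: "\<forall>k. c (n+k) = Val (v k)"
    and lub: "is_lub S le v a"
  shows "is_lub (liftset S) (lle le) c (Val a)"
  unfolding is_lub_def
proof (intro conjI allI ballI impI)
  show "Val a \<in> liftset S" using lub unfolding is_lub_def by simp
  fix i show "lle le (c i) (Val a)"
  proof (cases "i \<le> n")
    case True
    then have "lle le (c i) (c n)" using chain_mono_lle[OF tr ch] by simp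
    moreover have "lle le (c n) (Val a)" using v[rule_format, of 0] lub unfolding is_lub_def by simp
    ultimately show ?thesis using lle_trans[OF tr] by blast
  next
    case False
    then obtain k where "i = n + k" by (metis le_add_diff_inverse nat_le_linear)
    then show ?thesis using v lub unfolding is_lub_def by simp
  qed
next
  fix y assume yS: "y \<in> liftset S" and ub: "\<forall>i. lle le (c i) y"
  have "lle le (Val (v 0)) y" using ub v[rule_format, of 0] by (metis add_0_right)
  then obtain b where yb: "y = Val b" using lle_Val by metis
  have "\<forall>k. le (v k) b"
  proof
    fix k have "lle le (Val (v k)) (Val b)" using ub v yb by metis
    moreover have "v k \<in> S" using ch v unfolding is_chain_def by (metis liftset_simps(3))
    ultimately show "le (v k) b" using rf by auto
  qed
  moreover have "b \<in> S" using yS yb by simp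
  ultimately show "lle le (Val a) y" using lub yb unfolding is_lub_def by simp
qed


lemma lift_exists:
  assumes tr: "\<forall>a b c. le a b \<longrightarrow> le b c \<longrightarrow> le a c" and rf: "\<forall>a\<in>S. le a a"
    and ex: "\<forall>v. is_chain S le v \<longrightarrow> (\<exists>a. is_lub S le v a)"
    and ch: "is_chain (liftset S) (lle le) c"
  shows "\<exists>x. is_lub (liftset S) (lle le) c x"
proof (cases "\<forall>i. c i = Bot")
  case True
  then have "is_lub (liftset S) (lle le) c Bot" unfolding is_lub_def by simp
  then show ?thesis by blast
next
  case False
  then obtain n where cn: "c n \<noteq> Bot" by blast
  show ?thesis
  proof (cases "c n")
    case Bot then show ?thesis using cn by simp
  next
    case Star
    have "\<forall>i. lle le (c i) Star"
    proof
      fix i show "lle le (c i) Star"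
      proof (cases "i \<le> n")
        case True then show ?thesis using chain_mono_lle[OF tr ch True] Star by simp
      next
        case False then have "n \<le> i" by simp
        then show ?thesis using chain_mono_lle[OF tr ch] Star by (metis lle_Star lle_refl)
      qed
    qed
    moreover have "\<forall>y. lle le (c n) y \<longrightarrow> lle le Star y" using Star by simp
    ultimately have "is_lub (liftset S) (lle le) c Star" unfolding is_lub_def by auto
    then show ?thesis by blast
  next
    case (Val b)
    obtain v where v: "\<forall>k. c (n+k) = Val (v k)" and vc: "is_chain S le v"
      using lift_tail[OF tr rf ch Val] by blast
    obtain a where "is_lub S le v a" using ex vc by blast
    then show ?thesis using lub_lift[OF tr rf ch v] by blast
  qed
qed


lemma arr_lub:
  assumes sm: "sem_model B F"
    and tr2: "\<forall>a b c. ord B F t2 a b \<longrightarrow> ord B F t2 b c \<longrightarrow> ord B F t2 a c"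
    and ex2: "\<forall>c. is_chain (liftset (sdom B F t2)) (lle (ord B F t2)) c \<longrightarrow>
                 (\<exists>x. is_lub (liftset (sdom B F t2)) (lle (ord B F t2)) c x)"
    and ch: "is_chain (sdom B F (TArr t1 t2)) (ord B F (TArr t1 t2)) x"
  shows "\<exists>g\<in>funs B F t1 t2. is_lub (sdom B F (TArr t1 t2)) (ord B F (TArr t1 t2)) x (F g) \<and>
     (\<forall>P. \<forall>d\<in>sdom B F t1. is_lub (liftset (sdom B F t2)) (lle (ord B F t2)) (\<lambda>i. dec B F t1 t2 (x i) P d) (g P d))"
proof -
  let ?S1 = "sdom B F t1" and ?O1 = "ord B F t1" and ?S2 = "sdom B F t2" and ?O2 = "ord B F t2"
  let ?L = "liftset ?S2" and ?LO = "lle ?O2"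
  define fi where "fi i = dec B F t1 t2 (x i)" for i
  have xin: "x i \<in> sdom B F (TArr t1 t2)" for i using ch unfolding is_chain_def by blast
  have fiV: "fi i \<in> funs B F t1 t2" for i unfolding fi_def using dec_in[OF xin] .
  have xF: "x i = F (fi i)" for i unfolding fi_def using F_dec[OF xin] by simp
  have fstep: "?LO (fi i P d) (fi (Suc i) P d)" if "d \<in> ?S1" for i P d
    using ch that unfolding is_chain_def ord_arr_iff[OF sm] fi_def by blast
  have fiL: "fi i P d \<in> ?L" if "d \<in> ?S1" for i P d using fiV[of i] that unfolding funs_iff by blast
  have fich: "is_chain ?L ?LO (\<lambda>i. fi i P d)" if "d \<in> ?S1" for P d
    unfolding is_chain_def using fstep fiL that by blast
  have ficont: "cont_map ?S1 ?O1 ?S2 ?O2 (fi i P)" for i P using fiV[of i] unfolding funs_iff by blast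
  define g where "g P d = (if d \<in> ?S1 then (SOME l. is_lub ?L ?LO (\<lambda>i. fi i P d) l) else Bot)" for P d
  have glub: "is_lub ?L ?LO (\<lambda>i. fi i P d) (g P d)" if dS: "d \<in> ?S1" for P d
  proof -
    obtain l where "is_lub ?L ?LO (\<lambda>i. fi i P d) l" using ex2 fich[OF dS] by blast
    then show ?thesis unfolding g_def using dS by (metis (mono_tags, lifting) someI_ex)
  qed
  have ltr: "?LO a b \<Longrightarrow> ?LO b c \<Longrightarrow> ?LO a c" for a b c using lle_trans[OF tr2] by blast
  have gmono: "?LO (g P a) (g P b)" if ab: "a \<in> ?S1" "b \<in> ?S1" "?O1 a b" for P a b
  proof -
    have "\<forall>i. ?LO (fi i P a) (g P b)"
    proof
      fix i
      have "?LO (fi i P a) (fi i P b)" using ficont[of i P] ab unfolding cont_map_def by blast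
      moreover have "?LO (fi i P b) (g P b)" using glub[OF ab(2)] unfolding is_lub_def by blast
      ultimately show "?LO (fi i P a) (g P b)" using ltr by blast
    qed
    moreover have "g P b \<in> ?L" using glub[OF ab(2)] unfolding is_lub_def by blast
    ultimately show ?thesis using glub[OF ab(1)] unfolding is_lub_def by blast
  qed
  have gcont: "cont_map ?S1 ?O1 ?S2 ?O2 (g P)" for P
    unfolding cont_map_def
  proof (intro conjI allI ballI impI)
    fix a b assume "a \<in> ?S1" "b \<in> ?S1" "?O1 a b" then show "?LO (g P a) (g P b)" using gmono by blast
  next
    fix c y assume cc: "is_chain ?S1 ?O1 c" and cl: "is_lub ?S1 ?O1 c y"
    have yS: "y \<in> ?S1" using cl unfolding is_lub_def by blast
    have cS: "c j \<in> ?S1" for j using cc unfolding is_chain_def by blast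
    show "is_lub ?L ?LO (g P \<circ> c) (g P y)"
      unfolding is_lub_def
    proof (intro conjI allI ballI impI)
      show "g P y \<in> ?L" using glub[OF yS] unfolding is_lub_def by blast
      fix j show "?LO ((g P \<circ> c) j) (g P y)"
        using gmono[OF cS yS] cl unfolding is_lub_def by simp
    next
      fix z assume zL: "z \<in> ?L" and ub: "\<forall>j. ?LO ((g P \<circ> c) j) z"
      have "\<forall>i. ?LO (fi i P y) z"
      proof
        fix i
        have il: "is_lub ?L ?LO (fi i P \<circ> c) (fi i P y)" using ficont[of i P] cc cl unfolding cont_map_def by blast
        have "\<forall>j. ?LO ((fi i P \<circ> c) j) z"
        proof
          fix j
          have "?LO (fi i P (c j)) (g P (c j))" using glub[OF cS[of j]] unfolding is_lub_def by blast
          then show "?LO ((fi i P \<circ> c) j) z" using ub ltr by (metis comp_apply)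
        qed
        then show "?LO (fi i P y) z" using il zL unfolding is_lub_def by blast
      qed
      then show "?LO (g P y) z" using glub[OF yS] zL unfolding is_lub_def by blast
    qed
  qed
  have gV: "g \<in> funs B F t1 t2"
    unfolding funs_iff
  proof (intro conjI allI ballI impI)
    fix P d assume "d \<in> ?S1" then show "g P d \<in> ?L" using glub unfolding is_lub_def by blast
  next
    fix P d assume "d \<notin> ?S1" then show "g P d = Bot" unfolding g_def by simp
  next
    fix P show "cont_map ?S1 ?O1 ?S2 ?O2 (g P)" using gcont .
  qed
  have Fg: "F g \<in> sdom B F (TArr t1 t2)" using gV unfolding sdom_arr by blast
  have decg: "dec B F t1 t2 (F g) = g" using dec_F[OF sm gV] .
  have "is_lub (sdom B F (TArr t1 t2)) (ord B F (TArr t1 t2)) x (F g)"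
    unfolding is_lub_def
  proof (intro conjI allI ballI impI)
    show "F g \<in> sdom B F (TArr t1 t2)" using Fg .
    fix i show "ord B F (TArr t1 t2) (x i) (F g)"
      unfolding ord_arr_iff[OF sm] using xin Fg decg glub unfolding is_lub_def fi_def by auto
  next
    fix y assume yS: "y \<in> sdom B F (TArr t1 t2)" and ub: "\<forall>i. ord B F (TArr t1 t2) (x i) y"
    have "\<forall>P. \<forall>d\<in>?S1. ?LO (g P d) (dec B F t1 t2 y P d)"
    proof (intro allI ballI)
      fix P d assume dS: "d \<in> ?S1"
      have "\<forall>i. ?LO (fi i P d) (dec B F t1 t2 y P d)" using ub dS unfolding ord_arr_iff[OF sm] fi_def by blast
      moreover have "dec B F t1 t2 y P d \<in> ?L" using dec_in[OF yS] dS unfolding funs_iff by blast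
      ultimately show "?LO (g P d) (dec B F t1 t2 y P d)" using glub[OF dS] unfolding is_lub_def by blast
    qed
    then show "ord B F (TArr t1 t2) (F g) y" unfolding ord_arr_iff[OF sm] using Fg yS decg by simp
  qed
  then show ?thesis using gV glub unfolding fi_def by blast
qed


lemma lub_ex: assumes sm: "sem_model B F"
  shows "\<forall>c. is_chain (liftset (sdom B F t)) (lle (ord B F t)) c \<longrightarrow>
                 (\<exists>x. is_lub (liftset (sdom B F t)) (lle (ord B F t)) c x)"
proof (induction t)
  case TBool
  have tr: "\<forall>a b c. ord B F TBool a b \<longrightarrow> ord B F TBool b c \<longrightarrow> ord B F TBool a c"
    and rf: "\<forall>a\<in>sdom B F TBool. ord B F TBool a a" using ord_props[OF sm, of TBool] by blast+
  have ex: "\<forall>v. is_chain (sdom B F TBool) (ord B F TBool) v \<longrightarrow> (\<exists>a. is_lub (sdom B F TBool) (ord B F TBool) v a)"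
  proof (intro allI impI)
    fix v assume vc: "is_chain (sdom B F TBool) (ord B F TBool) v"
    have h0: "v 0 = v i" for i using chain_mono[OF tr rf vc, of 0 i] by (simp add: ord_bool)
    have h: "v i = v 0" for i using h0[of i] by simp
    have "is_lub (sdom B F TBool) (ord B F TBool) v (v 0)" using vc h
      unfolding is_lub_def is_chain_def by (simp add: ord_bool)
    then show "\<exists>a. is_lub (sdom B F TBool) (ord B F TBool) v a" by blast
  qed
  show ?case using lift_exists[OF tr rf ex] by blast
next
  case (TArr t1 t2)
  have tr: "\<forall>a b c. ord B F (TArr t1 t2) a b \<longrightarrow> ord B F (TArr t1 t2) b c \<longrightarrow> ord B F (TArr t1 t2) a c"
    and rf: "\<forall>a\<in>sdom B F (TArr t1 t2). ord B F (TArr t1 t2) a a" using ord_props[OF sm, of "TArr t1 t2"] by blast+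
  have tr2: "\<forall>a b c. ord B F t2 a b \<longrightarrow> ord B F t2 b c \<longrightarrow> ord B F t2 a c" using ord_props[OF sm, of t2] by blast
  have ex: "\<forall>v. is_chain (sdom B F (TArr t1 t2)) (ord B F (TArr t1 t2)) v \<longrightarrow>
     (\<exists>a. is_lub (sdom B F (TArr t1 t2)) (ord B F (TArr t1 t2)) v a)"
    using arr_lub[OF sm tr2 TArr.IH(2)] by blast
  show ?case using lift_exists[OF tr rf ex] by blast
qed

lemma pointwise:
  assumes sm: "sem_model B F"
    and ch: "is_chain (liftset (sdom B F (TArr t1 t2))) (lle (ord B F (TArr t1 t2))) u"
    and lub: "is_lub (liftset (sdom B F (TArr t1 t2))) (lle (ord B F (TArr t1 t2))) u (Val a)"
    and un: "u n = Val b"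
  shows "\<exists>v. (\<forall>k. u (n+k) = Val (v k)) \<and> a \<in> sdom B F (TArr t1 t2) \<and> (\<forall>k. v k \<in> sdom B F (TArr t1 t2)) \<and>
     (\<forall>P. \<forall>d\<in>sdom B F t1. is_lub (liftset (sdom B F t2)) (lle (ord B F t2))
         (\<lambda>k. dec B F t1 t2 (v k) P d) (dec B F t1 t2 a P d))"
proof -
  have tr: "\<forall>a b c. ord B F (TArr t1 t2) a b \<longrightarrow> ord B F (TArr t1 t2) b c \<longrightarrow> ord B F (TArr t1 t2) a c"
    and an: "\<forall>a b. ord B F (TArr t1 t2) a b \<longrightarrow> ord B F (TArr t1 t2) b a \<longrightarrow> a = b"
    and rf: "\<forall>a\<in>sdom B F (TArr t1 t2). ord B F (TArr t1 t2) a a" using ord_props[OF sm, of "TArr t1 t2"] by blast+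
  have tr2: "\<forall>a b c. ord B F t2 a b \<longrightarrow> ord B F t2 b c \<longrightarrow> ord B F t2 a c" using ord_props[OF sm, of t2] by blast
  obtain v where v: "\<forall>k. u (n+k) = Val (v k)" and vc: "is_chain (sdom B F (TArr t1 t2)) (ord B F (TArr t1 t2)) v"
    using lift_tail[OF tr rf ch un] by blast
  have vl: "is_lub (sdom B F (TArr t1 t2)) (ord B F (TArr t1 t2)) v a" using tail_lub[OF tr rf ch v lub] .
  obtain g where gV: "g \<in> funs B F t1 t2" and gl: "is_lub (sdom B F (TArr t1 t2)) (ord B F (TArr t1 t2)) v (F g)"
    and gp: "\<forall>P. \<forall>d\<in>sdom B F t1. is_lub (liftset (sdom B F t2)) (lle (ord B F t2)) (\<lambda>i. dec B F t1 t2 (v i) P d) (g P d)"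
    using arr_lub[OF sm tr2 lub_ex[OF sm] vc] by blast
  have "a = F g" using lub_unique[OF an vl gl] .
  then have "dec B F t1 t2 a = g" using dec_F[OF sm gV] by simp
  moreover have "a \<in> sdom B F (TArr t1 t2)" "\<forall>k. v k \<in> sdom B F (TArr t1 t2)"
    using vl vc unfolding is_lub_def is_chain_def by blast+
  ultimately show ?thesis using v gp by auto
qed

lemma lub_ub: "is_lub S le c x \<Longrightarrow> le (c i) x" unfolding is_lub_def by blast
lemma lub_least: "is_lub S le c x \<Longrightarrow> y \<in> S \<Longrightarrow> (\<And>i. le (c i) y) \<Longrightarrow> le x y" unfolding is_lub_def by blast
lemma lub_in: "is_lub S le c x \<Longrightarrow> x \<in> S" unfolding is_lub_def by blast
lemma lle_ValStar[simp]: "\<not> lle le (Val a) Star" unfolding lle_def by auto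

theorem lemma1:
  fixes B :: "bool \<Rightarrow> 'u" and F :: "('p set \<Rightarrow> 'u \<Rightarrow> 'u lift) \<Rightarrow> 'u"
    and th :: "'p aty" and u :: "nat \<Rightarrow> 'u lift" and x :: "'u lift"
  assumes "sem_model B F"
    and "is_chain (liftset (sdom B F (erase th))) (lle (ord B F (erase th))) u"
    and "is_lub (liftset (sdom B F (erase th))) (lle (ord B F (erase th))) u x"
    and "\<forall>i. safe B F th (u i)"
  shows "safe B F th x"
  using assms(2-4)
proof (induction th arbitrary: u x)
  case ABool
  show ?case
  proof (cases x)
    case Star
    have "\<forall>i. u i = Bot"
    proof
      fix i have "lle (ord B F (erase ABool)) (u i) Star" using lub_ub[OF ABool.prems(2)] Star by simp
      moreover have "safe B F ABool (u i)" using ABool.prems(3) by blast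
      ultimately show "u i = Bot" by (cases "u i") auto
    qed
    then have "lle (ord B F (erase ABool)) x Bot" using lub_least[OF ABool.prems(2), of Bot] by simp
    then show ?thesis using Star by simp
  next
    case Bot then show ?thesis by simp
  next
    case (Val b) then show ?thesis by simp
  qed
next
  case (AArr th1 Pi th2)
  let ?t1 = "erase th1" and ?t2 = "erase th2"
  have sm: "sem_model B F" using assms(1) .
  show ?case
  proof (cases x)
    case Bot then show ?thesis by simp
  next
    case Star
    have "\<forall>i. u i = Bot"
    proof
      fix i have "lle (ord B F (erase (AArr th1 Pi th2))) (u i) Star" using lub_ub[OF AArr.prems(2)] Star by simp
      moreover have "safe B F (AArr th1 Pi th2) (u i)" using AArr.prems(3) by blast
      ultimately show "u i = Bot" by (cases "u i") auto
    qed
    then have "lle (ord B F (erase (AArr th1 Pi th2))) x Bot" using lub_least[OF AArr.prems(2), of Bot] by simp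
    then show ?thesis using Star by simp
  next
    case (Val a)
    have "\<exists>n b. u n = Val b"
    proof (rule ccontr)
      assume "\<not> ?thesis"
      have "\<forall>i. u i = Bot"
      proof
        fix i show "u i = Bot" using AArr.prems(3)[rule_format, of i] \<open>\<not> (\<exists>n b. u n = Val b)\<close>
          by (cases "u i") auto
      qed
      then have "lle (ord B F (erase (AArr th1 Pi th2))) x Bot" using lub_least[OF AArr.prems(2), of Bot] by simp
      then show False using Val by simp
    qed
    then obtain n b where un: "u n = Val b" by blast
    have ch: "is_chain (liftset (sdom B F (TArr ?t1 ?t2))) (lle (ord B F (TArr ?t1 ?t2))) u"
      and lub: "is_lub (liftset (sdom B F (TArr ?t1 ?t2))) (lle (ord B F (TArr ?t1 ?t2))) u (Val a)"
      using AArr.prems(1,2) Val by simp_all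
    obtain v where v: "\<forall>k. u (n+k) = Val (v k)" and aS: "a \<in> sdom B F (TArr ?t1 ?t2)"
      and vS: "\<forall>k. v k \<in> sdom B F (TArr ?t1 ?t2)"
      and pw: "\<forall>P. \<forall>d\<in>sdom B F ?t1. is_lub (liftset (sdom B F ?t2)) (lle (ord B F ?t2))
         (\<lambda>k. dec B F ?t1 ?t2 (v k) P d) (dec B F ?t1 ?t2 a P d)"
      using pointwise[OF sm ch lub un] by blast
    show ?thesis unfolding Val safe.simps
    proof (intro allI ballI impI)
      fix P d assume dS: "d \<in> sdom B F ?t1" and PP: "Pi \<subseteq> P" and sd: "safe B F th1 (Val d)"
      have vsafe: "safe B F th2 (dec B F ?t1 ?t2 (v k) P d)" for k
      proof -
        have "safe B F (AArr th1 Pi th2) (u (n+k))" using AArr.prems(3) by blast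
        then have "safe B F (AArr th1 Pi th2) (Val (v k))" using v by simp
        then have "safe B F th2 (app B F ?t1 ?t2 (v k) P d)" using dS PP sd by simp
        then show ?thesis using app_dec[OF sm vS[rule_format, of k]] by simp
      qed
      have vch: "is_chain (liftset (sdom B F ?t2)) (lle (ord B F ?t2)) (\<lambda>k. dec B F ?t1 ?t2 (v k) P d)"
      proof -
        have "dec B F ?t1 ?t2 (v k) P d \<in> liftset (sdom B F ?t2)" for k
          using dec_in[OF vS[rule_format, of k]] dS unfolding funs_iff by blast
        moreover have "lle (ord B F ?t2) (dec B F ?t1 ?t2 (v k) P d) (dec B F ?t1 ?t2 (v (Suc k)) P d)" for k
        proof -
          have "lle (ord B F (TArr ?t1 ?t2)) (u (n+k)) (u (n + Suc k))" using ch unfolding is_chain_def by simp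
          then have "v k = v (Suc k) \<or> ord B F (TArr ?t1 ?t2) (v k) (v (Suc k))" using v[rule_format, of k] v[rule_format, of "Suc k"] by simp
          then show ?thesis using dS unfolding ord_arr_iff[OF sm] by auto
        qed
        ultimately show ?thesis unfolding is_chain_def by blast
      qed
      have "safe B F th2 (dec B F ?t1 ?t2 a P d)"
        using AArr.IH(2)[OF vch pw[rule_format, OF dS]] vsafe by blast
      then show "safe B F th2 (app B F ?t1 ?t2 a P d)" using app_dec[OF sm aS] by simp
    qed
  qed
qed

end
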